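(* Let $n\ge4$ be even, $p\ge n+1$ an integer, $c_1$ a positive integer, $a_k=pc_k$, $c_{k+1}=p^2c_k$, and let $T$, $I^{(k)}_i$ and $\lambda_1$ be as in the context. Then for every $k\ge1$ and every $1\le i\le n/2-1$: (1) $\lambda_1(I^{(k)}_{2i+1})\le\frac{1}{p-1}\lambda_1(I^{(k)}_{2i})$; (2) $\lambda_1(I^{(k)}_{2i})\le\frac{1}{c_k}\lambda_1(I^{(k)}_n)$; (3) $\lambda_1(I^{(k)}_{2i})\le\frac{1}{c_k-1}\lambda_1(I^{(k)}_1)$.
   Context: $\pi$ is the permutation of $\{1,\dots,n\}$ with top row $1,2,\dots,n$ and bottom row $n,3,2,5,4,\dots,n-1,n-2,1$. Right Rauzy induction: step "0" when the rightmost domain (top) interval is longer, "1" when the rightmost image (bottom) interval is longer. For $a,c>0$, $\dot\gamma_{m,a}=1^{n-1-m}0^a10^2$, $\gamma_{a,c}=0\,\dot\gamma_{n-2,a}\cdots\dot\gamma_{2,a}\,1^{c(n-1)}$; its transition matrix $\Theta_{a,c}$ (old lengths $=\Theta_{a,c}\cdot$new lengths) has row $1=(1,c,\dots,c)$, row $n=(1,c+1,\dots,c+1)$, and for $1\le i\le(n-2)/2$: row $2i$ has $0$ in column 1, $2$ in columns $2i,2i+1$, $1$ in the other columns among $2,\dots,n$; row $2i+1$ has $a$ in column $2i$, $a+1$ in column $2i+1$, $0$ elsewhere. $\Theta_k=\Theta_{a_k,c_k}$. $T$ is an IET of $[0,1)$ with permutation $\pi$ whose right Rauzy induction path is $\gamma_{a_1,c_1}\gamma_{a_2,c_2}\cdots$;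 $I^{(k)}$ is the interval on which the induced map lives after the first $k$ blocks and $I^{(k)}_1,\dots,I^{(k)}_n$ its exchanged subintervals; lengths satisfy $\ell^{(k-1)}=\Theta_k\ell^{(k)}$. For $v\ge0$, $|v|$ is the sum of entries and $\overline v=v/|v|$. $\lambda_1$ denotes the $T$-invariant Borel probability measure such that for every $k\ge0$, $(\lambda_1(I^{(k)}_i))_i$ is a positive multiple of $\lim_{m\to\infty}\overline{\Theta_{k+1}\cdots\Theta_me_1}$. *)

theory Defs
  imports Complex_Main
begin

text \<open>Vectors in R^n are functions nat => real, meaningful on indices 1..n;
n x n matrices are functions nat => nat => real, meaningful on 1..n x 1..n.\<close>

definition Theta :: "nat \<Rightarrow> real \<Rightarrow> real \<Rightarrow> nat \<Rightarrow> nat \<Rightarrow> real" where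
  "Theta n a c i j =
     (if i = 1 then (if j = 1 then 1 else c)
      else if i = n then (if j = 1 then 1 else c + 1)
      else if even i then (if j = 1 then 0 else if j = i \<or> j = i + 1 then 2 else 1)
      else (if j = i - 1 then a else if j = i then a + 1 else 0))"

definition mat_vec :: "nat \<Rightarrow> (nat \<Rightarrow> nat \<Rightarrow> real) \<Rightarrow> (nat \<Rightarrow> real) \<Rightarrow> nat \<Rightarrow> real" where
  "mat_vec n M v = (\<lambda>i. \<Sum>j = 1..n. M i j * v j)"

definition e1 :: "nat \<Rightarrow> real" where
  "e1 = (\<lambda>i. if i = 1 then 1 else 0)"

definition vsum :: "nat \<Rightarrow> (nat \<Rightarrow> real) \<Rightarrow> real" where
  "vsum n v = (\<Sum>i = 1..n. v i)"

definition normalize_vec :: "nat \<Rightarrow> (nat \<Rightarrow> real) \<Rightarrow> nat \<Rightarrow> real" where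
  "normalize_vec n v = (\<lambda>i. v i / vsum n v)"

text \<open>theta_prod n Th k d = Th(k+1) * Th(k+2) * ... * Th(k+d) * e1.\<close>
primrec theta_prod :: "nat \<Rightarrow> (nat \<Rightarrow> nat \<Rightarrow> nat \<Rightarrow> real) \<Rightarrow> nat \<Rightarrow> nat \<Rightarrow> nat \<Rightarrow> real" where
  "theta_prod n Th k 0 = e1"
| "theta_prod n Th k (Suc d) = mat_vec n (Th (k + 1)) (theta_prod n Th (k + 1) d)"

end

theory Submission
  imports Defs
begin

lemma split1: "n \<ge> 1 \<Longrightarrow> (\<Sum>j=1..n. f j) = f 1 + (\<Sum>j=2..(n::nat). (f j::real))"
proof -
  assume "n \<ge> 1"
  then have "{1..n} = insert 1 {2..n}" by auto
  then show ?thesis by simp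
qed

lemma row1:
  assumes "n \<ge> 4"
  shows "mat_vec n (Theta n A C) w 1 = w 1 + C * (\<Sum>j=2..n. w j)"
proof -
  have "mat_vec n (Theta n A C) w 1 = Theta n A C 1 1 * w 1 + (\<Sum>j=2..n. Theta n A C 1 j * w j)"
    unfolding mat_vec_def using assms by (intro split1) auto
  also have "(\<Sum>j=2..n. Theta n A C 1 j * w j) = (\<Sum>j=2..n. C * w j)"
    by (rule sum.cong) (auto simp: Theta_def)
  also have "Theta n A C 1 1 = 1" by (simp add: Theta_def)
  finally show ?thesis by (simp add: sum_distrib_left)
qed

lemma rown:
  assumes "n \<ge> 4"
  shows "mat_vec n (Theta n A C) w n = w 1 + (C + 1) * (\<Sum>j=2..n. w j)"
proof -
  have "mat_vec n (Theta n A C) w n = Theta n A C n 1 * w 1 + (\<Sum>j=2..n. Theta n A C n j * w j)"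
    unfolding mat_vec_def using assms by (intro split1) auto
  also have "(\<Sum>j=2..n. Theta n A C n j * w j) = (\<Sum>j=2..n. (C + 1) * w j)"
    by (rule sum.cong) (use assms in \<open>auto simp: Theta_def\<close>)
  also have "Theta n A C n 1 = 1" using assms by (simp add: Theta_def)
  finally show ?thesis by (simp add: sum_distrib_left)
qed

lemma roweven:
  assumes "n \<ge> 4" "1 \<le> i" "2 * i + 2 \<le> n"
  shows "mat_vec n (Theta n A C) w (2*i) = (\<Sum>j=2..n. w j) + w (2*i) + w (2*i+1)"
proof -
  have "mat_vec n (Theta n A C) w (2*i) = Theta n A C (2*i) 1 * w 1 + (\<Sum>j=2..n. Theta n A C (2*i) j * w j)"
    unfolding mat_vec_def using assms by (intro split1) auto
  also have "(\<Sum>j=2..n. Theta n A C (2*i) j * w j) = (\<Sum>j=2..n. w j + (if j = 2*i then w j else 0) + (if j = 2*i+1 then w j else 0))"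
    by (rule sum.cong) (use assms in \<open>auto simp: Theta_def\<close>)
  also have "\<dots> = (\<Sum>j=2..n. w j) + w (2*i) + w (2*i+1)"
    using assms by (simp add: sum.distrib)
  also have "Theta n A C (2*i) 1 = 0" using assms by (simp add: Theta_def)
  finally show ?thesis by simp
qed

lemma rowodd:
  assumes "n \<ge> 4" "even n" "1 \<le> i" "2 * i + 2 \<le> n"
  shows "mat_vec n (Theta n A C) w (2*i+1) = A * w (2*i) + (A + 1) * w (2*i+1)"
proof -
  have "mat_vec n (Theta n A C) w (2*i+1) = (\<Sum>j=1..n. (if j = 2*i then A * w j else 0) + (if j = 2*i+1 then (A+1) * w j else 0))"
    unfolding mat_vec_def
    by (rule sum.cong) (use assms in \<open>auto simp: Theta_def\<close>)
  also have "\<dots> = A * w (2*i) + (A + 1) * w (2*i+1)"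
    using assms by (simp add: sum.distrib)
  finally show ?thesis .
qed

definition invv :: "nat \<Rightarrow> real \<Rightarrow> real \<Rightarrow> (nat \<Rightarrow> real) \<Rightarrow> bool" where
  "invv n p C v \<longleftrightarrow> (\<forall>j. v j \<ge> 0) \<and> v 1 > 0 \<and>
     (\<forall>i. 1 \<le> i \<and> 2*i+2 \<le> n \<longrightarrow> (p-1) * v (2*i+1) \<le> v (2*i) \<and> C * v (2*i) \<le> v n
        \<and> v n \<le> v 1 + v (2*i))"

lemma Theta_nonneg: "A \<ge> 0 \<Longrightarrow> C \<ge> 0 \<Longrightarrow> Theta n A C i j \<ge> 0"
  by (simp add: Theta_def)

lemma step:
  assumes n: "n \<ge> 4" "even n" and p: "p \<ge> 5" and C: "C \<ge> 1"
    and w: "invv n p (p^2 * C) w"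
  shows "invv n p C (mat_vec n (Theta n (p*C) C) w)"
proof -
  let ?v = "mat_vec n (Theta n (p*C) C) w"
  define S where "S = (\<Sum>j=2..n. w j)"
  have wnn: "\<And>j. w j \<ge> 0" and w1: "w 1 > 0" using w by (auto simp: invv_def)
  have Sn: "w n \<le> S" unfolding S_def
    by (rule member_le_sum) (use n wnn in auto)
  have nn: "\<forall>j. ?v j \<ge> 0"
    unfolding mat_vec_def using p C wnn by (auto intro!: sum_nonneg mult_nonneg_nonneg Theta_nonneg)
  have S0: "S \<ge> 0" unfolding S_def using wnn by (auto intro: sum_nonneg)
  have v1: "?v 1 = w 1 + C * S" using row1[OF n(1)] S_def by simp
  have vn: "?v n = w 1 + (C + 1) * S" using rown[OF n(1)] S_def by simp
  have pos: "?v 1 > 0" using v1 w1 S0 C by (simp add: add_pos_nonneg)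
  have rest: "(p-1) * ?v (2*i+1) \<le> ?v (2*i) \<and> C * ?v (2*i) \<le> ?v n \<and> ?v n \<le> ?v 1 + ?v (2*i)"
    if i: "1 \<le> i" "2*i+2 \<le> n" for i
  proof -
    define x where "x = w (2*i)"
    define y where "y = w (2*i+1)"
    have ve: "?v (2*i) = S + x + y" using roweven[OF n(1) i] S_def x_def y_def by simp
    have vo: "?v (2*i+1) = p*C * x + (p*C + 1) * y" using rowodd[OF n i] x_def y_def by simp
    have x0: "x \<ge> 0" and y0: "y \<ge> 0" using wnn x_def y_def by auto
    have hy: "(p-1) * y \<le> x" and hx: "p^2*C * x \<le> w n"
      using w i by (auto simp: invv_def x_def y_def)
    have a1: "(p-1) * ((p*C+1) * y) \<le> (p*C+1) * x"
      using mult_left_mono[OF hy, of "p*C+1"] p C by (simp add: algebra_simps)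
    have a: "(p-1) * ?v (2*i+1) \<le> ?v (2*i)"
    proof -
      have "(p-1) * ?v (2*i+1) = (p-1)*(p*C)*x + (p-1) * ((p*C+1) * y)" using vo by (simp add: algebra_simps)
      also have "\<dots> \<le> (p-1)*(p*C)*x + (p*C+1) * x" using a1 by simp
      also have "\<dots> = p^2*C*x + x" by (simp add: algebra_simps power2_eq_square)
      also have "\<dots> \<le> S + x + y" using hx Sn y0 by simp
      finally show ?thesis using ve by simp
    qed
    have "1 * y \<le> (p-1)*y" using mult_right_mono[of 1 "p-1" y] p y0 by simp
    then have yx: "y \<le> x" using hy by simp
    have cx: "25 * (C * x) \<le> p^2 * C * x"
    proof -
      have "5*5 \<le> p*p" using mult_mono[of 5 p 5 p] p by simp
      then have "25 \<le> p^2" by (simp add: power2_eq_square)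
      then show ?thesis using C x0 by (simp add: mult_right_mono mult.assoc)
    qed
    have b: "C * ?v (2*i) \<le> ?v n"
    proof -
      have "C * y \<le> C * x" using yx C by (simp add: mult_left_mono)
      moreover have "C * x \<ge> 0" using C x0 by simp
      ultimately have "C * (x + y) \<le> S" using cx hx Sn by (simp add: algebra_simps)
      then show ?thesis using ve vn w1 by (simp add: algebra_simps)
    qed
    have d: "?v n \<le> ?v 1 + ?v (2*i)" using vn v1 ve x0 y0 by (simp add: algebra_simps)
    show ?thesis using a b d by simp
  qed
  show ?thesis unfolding invv_def using nn pos rest by blast
qed

lemma scl: "(s::real) > 0 \<Longrightarrow> al * x \<le> y \<Longrightarrow> al * (x / s) \<le> y / s"
  by (metis divide_right_mono less_imp_le times_divide_eq_right)

lemma scl2: "(s::real) > 0 \<Longrightarrow> z \<le> x + y \<Longrightarrow> z / s \<le> x / s + y / s"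
  by (metis add_divide_distrib divide_right_mono less_imp_le)

lemma unscl: "(r::real) > 0 \<Longrightarrow> al * (x / r) \<le> y / r \<Longrightarrow> al * x \<le> y"
proof -
  assume r: "r > 0" and h: "al * (x / r) \<le> y / r"
  have "(al * x) / r \<le> y / r" using h by simp
  then show ?thesis using r by (simp add: divide_le_cancel)
qed

lemma allinv:
  assumes n: "n \<ge> 4" "even n" and p: "p \<ge> 5"
    and C1: "\<forall>k\<ge>1. C k \<ge> 1" and CS: "\<forall>k\<ge>1. C (Suc k) = p^2 * C k"
    and Th: "\<forall>m\<ge>1. Th m = Theta n (p * C m) (C m)"
  shows "\<forall>k\<ge>1. invv n p (C (k+1)) (theta_prod n Th k d)"
proof (induction d)
  case 0
  show ?case using n by (auto simp: invv_def e1_def)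
next
  case (Suc d)
  show ?case
  proof (intro allI impI)
    fix k :: nat assume k: "k \<ge> 1"
    have "invv n p (C (k+1+1)) (theta_prod n Th (k+1) d)" using Suc k by simp
    then have w: "invv n p (p^2 * C (k+1)) (theta_prod n Th (k+1) d)" using CS k by simp
    have "invv n p (C (k+1)) (mat_vec n (Theta n (p * C (k+1)) (C (k+1))) (theta_prod n Th (k+1) d))"
      by (rule step[OF n p _ w]) (use C1 k in simp)
    then show "invv n p (C (k+1)) (theta_prod n Th k (Suc d))" using Th by simp
  qed
qed

theorem mainTheorem8:
  fixes n p c1 :: nat and a c :: "nat \<Rightarrow> nat" and mu :: "nat \<Rightarrow> nat \<Rightarrow> real"
  assumes "n \<ge> 4" and "even n" and "p \<ge> n + 1" and "c1 > 0"
    and "c 1 = c1"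
    and "\<forall>k\<ge>1. c (Suc k) = p ^ 2 * c k"
    and "\<forall>k\<ge>1. a k = p * c k"
    and "\<forall>k. \<exists>r>0. \<forall>i\<in>{1..n}.
           ((\<lambda>d. normalize_vec n
                   (theta_prod n (\<lambda>m. Theta n (real (a m)) (real (c m))) k d) i)
            \<longlongrightarrow> mu k i / r) sequentially"
  shows "\<forall>k\<ge>1. \<forall>i. 1 \<le> i \<and> i \<le> n div 2 - 1 \<longrightarrow>
           mu k (2 * i + 1) \<le> 1 / (real p - 1) * mu k (2 * i)
         \<and> mu k (2 * i) \<le> 1 / real (c k) * mu k n
         \<and> (real (c k) - 1) * mu k (2 * i) \<le> mu k 1"
proof (intro allI impI)
  fix k i :: nat assume k: "k \<ge> 1" and i: "1 \<le> i \<and> i \<le> n div 2 - 1"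
  let ?Th = "\<lambda>m. Theta n (real (a m)) (real (c m))"
  let ?C = "\<lambda>m. real (c m)"
  have cpos: "\<forall>k\<ge>1. c k \<ge> 1"
  proof (intro allI impI)
    fix k :: nat assume "k \<ge> 1"
    then show "c k \<ge> 1"
    proof (induction k rule: dec_induct)
      case base then show ?case using assms by simp
    next
      case (step m)
      then show ?case using assms by simp
    qed
  qed
  have p5: "real p \<ge> 5" using assms by simp
  have inv: "\<forall>k\<ge>1. invv n (real p) (?C (k+1)) (theta_prod n ?Th k d)" for d
    by (rule allinv[OF assms(1,2) p5]) (use cpos assms in auto)
  have i2: "2*i+2 \<le> n" using i assms by auto
  obtain r where r: "r > 0" and lim: "\<forall>j\<in>{1..n}. ((\<lambda>d. normalize_vec n (theta_prod n ?Th k d) j) \<longlongrightarrow> mu k j / r) sequentially"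
    using assms(8) by blast
  define u where "u = (\<lambda>d j. normalize_vec n (theta_prod n ?Th k d) j)"
  have l1: "(\<lambda>d. u d 1) \<longlonglongrightarrow> mu k 1 / r" using lim assms(1) unfolding u_def by auto
  have ln: "(\<lambda>d. u d n) \<longlonglongrightarrow> mu k n / r" using lim assms(1) unfolding u_def by auto
  have le: "(\<lambda>d. u d (2*i)) \<longlonglongrightarrow> mu k (2*i) / r" using lim i i2 unfolding u_def by auto
  have lo: "(\<lambda>d. u d (2*i+1)) \<longlonglongrightarrow> mu k (2*i+1) / r" using lim i i2 unfolding u_def by auto
  have props: "0 \<le> u d (2*i) \<and> (real p - 1) * u d (2*i+1) \<le> u d (2*i) \<and> ?C (k+1) * u d (2*i) \<le> u d n
      \<and> u d n \<le> u d 1 + u d (2*i)" for d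
  proof -
    let ?v = "theta_prod n ?Th k d"
    have iv: "invv n (real p) (?C (k+1)) ?v" using inv k by blast
    then have vnn: "\<And>j. ?v j \<ge> 0" and v1: "?v 1 > 0" by (auto simp: invv_def)
    have h: "(real p - 1) * ?v (2*i+1) \<le> ?v (2*i) \<and> ?C (k+1) * ?v (2*i) \<le> ?v n \<and> ?v n \<le> ?v 1 + ?v (2*i)"
      using iv i i2 unfolding invv_def by blast
    have "?v 1 \<le> vsum n ?v" unfolding vsum_def
      by (rule member_le_sum) (use assms(1) vnn in auto)
    then have s: "vsum n ?v > 0" using v1 by linarith
    have u: "u d j = ?v j / vsum n ?v" for j unfolding u_def normalize_vec_def by simp
    show ?thesis unfolding u
      using divide_nonneg_pos[OF vnn[of "2*i"] s] scl[OF s] scl2[OF s] h by blast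
  qed
  have L0: "0 \<le> mu k (2*i) / r"
    by (rule LIMSEQ_le_const[OF le]) (use props in auto)
  have La: "(real p - 1) * (mu k (2*i+1) / r) \<le> mu k (2*i) / r"
    by (rule LIMSEQ_le[OF tendsto_mult_left[OF lo] le]) (use props in auto)
  have Lb: "?C (k+1) * (mu k (2*i) / r) \<le> mu k n / r"
    by (rule LIMSEQ_le[OF tendsto_mult_left[OF le] ln]) (use props in auto)
  have Ld: "mu k n / r \<le> mu k 1 / r + mu k (2*i) / r"
    by (rule LIMSEQ_le[OF ln tendsto_add[OF l1 le]]) (use props in auto)
  have M0: "0 \<le> mu k (2*i)" using L0 r by (simp add: divide_nonneg_pos zero_le_divide_iff)
  have Ma: "(real p - 1) * mu k (2*i+1) \<le> mu k (2*i)" by (rule unscl[OF r La])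
  have Mb: "?C (k+1) * mu k (2*i) \<le> mu k n" by (rule unscl[OF r Lb])
  have Md: "mu k n \<le> mu k 1 + mu k (2*i)" using Ld r by (simp add: divide_le_cancel add_divide_distrib[symmetric])
  have ck: "?C k \<ge> 1" using cpos k by simp
  have cle: "?C k \<le> ?C (k+1)"
  proof -
    have "c (k+1) = p^2 * c k" using assms(6) k by simp
    moreover have "p^2 \<ge> (1::nat)" using assms by simp
    ultimately have "c k \<le> c (k+1)" by simp
    then show ?thesis by simp
  qed
  have p1: "real p - 1 > 0" using p5 by simp
  have g1: "mu k (2 * i + 1) \<le> 1 / (real p - 1) * mu k (2 * i)"
    using Ma p1 by (simp add: field_simps mult.commute)
  have "?C k * mu k (2*i) \<le> ?C (k+1) * mu k (2*i)" using cle M0 by (simp add: mult_right_mono)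
  then have g2': "?C k * mu k (2*i) \<le> mu k n" using Mb by simp
  have g2: "mu k (2 * i) \<le> 1 / real (c k) * mu k n" using g2' ck by (simp add: field_simps mult.commute)
  have g3: "(real (c k) - 1) * mu k (2 * i) \<le> mu k 1" using g2' Md by (simp add: algebra_simps)
  show "mu k (2 * i + 1) \<le> 1 / (real p - 1) * mu k (2 * i)
         \<and> mu k (2 * i) \<le> 1 / real (c k) * mu k n
         \<and> (real (c k) - 1) * mu k (2 * i) \<le> mu k 1" using g1 g2 g3 by blast
qed

end
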